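(* Let $k$ be a field, $E$ a $k$-vector space of dimension $n$, and $f\in\operatorname{End}_k(E)$ an endomorphism with annihilating (minimal) polynomial $x^n$. Let $e\in E$ be a vector with $f^{n-1}(e)\neq 0$. Then the generalized inverses $g\in\operatorname{End}_k(E)$ of $f$ are exactly the linear maps determined by $$g(f^i(e))=\begin{cases} f^{i-1}(e)+\lambda_i f^{n-1}(e) & \text{if } 1\le i\le n-1,\\ \sum_{h=0}^{n-1}\alpha_h f^h(e) & \text{if } i=0,\end{cases}$$ where $\lambda_1,\dots,\lambda_{n-1},\alpha_0,\dots,\alpha_{n-1}\in k$ are arbitrary scalars.
   Context: A generalized inverse of an endomorphism $f$ of $E$ is an endomorphism $g$ of $E$ with $f\circ g\circ f=f$. *)

theory Defs
  imports Complex_Main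
begin

definition generalized_inverse ::
  "('k::field \<Rightarrow> 'v::ab_group_add \<Rightarrow> 'v) \<Rightarrow> ('v \<Rightarrow> 'v) \<Rightarrow> ('v \<Rightarrow> 'v) \<Rightarrow> bool" where
  "generalized_inverse scale f g \<longleftrightarrow> Vector_Spaces.linear scale scale g \<and> f \<circ> g \<circ> f = f"

end

theory Submission
  imports Defs
begin

locale nilcyc = vector_space scale
  for scale :: "'k::field \<Rightarrow> 'v::ab_group_add \<Rightarrow> 'v" (infixr \<open>*s\<close> 75) +
  fixes f :: "'v \<Rightarrow> 'v" and e :: 'v and n :: nat
  assumes fin: "\<exists>B. finite B \<and> span B = UNIV"
    and dimn: "dim UNIV = n"
    and lin: "Vector_Spaces.linear scale scale f"
    and annih: "f ^^ n = (\<lambda>_. 0)"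
    and e: "(f ^^ (n - 1)) e \<noteq> 0"
begin

interpretation vp: vector_space_pair scale scale by unfold_locales

lemma linpow: "Vector_Spaces.linear scale scale (f ^^ m)"
proof (induction m)
  case 0
  then show ?case using linear_id by (simp add: id_def)
next
  case (Suc m)
  show ?case unfolding funpow.simps(2) by (rule Vector_Spaces.linear_compose[OF Suc lin])
qed

lemma pw: "(f ^^ a) ((f ^^ b) x) = (f ^^ (a + b)) x"
  by (simp add: funpow_add)

lemma big0: "m \<ge> n \<Longrightarrow> (f ^^ m) x = 0"
proof -
  assume "m \<ge> n"
  then have "(f ^^ m) x = (f ^^ (m - n)) ((f ^^ n) x)" by (simp add: pw)
  also have "\<dots> = 0" using annih vp.linear_0[OF linpow] by simp
  finally show ?thesis .
qed

lemma npos: "n \<ge> 1"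
proof (rule ccontr)
  assume "\<not> n \<ge> 1"
  then have "n = 0" by simp
  moreover have "(f ^^ n) e = 0" using annih by simp
  ultimately show False using e by simp
qed

lemma key: "(\<Sum>i<n. c i *s (f ^^ i) e) = 0 \<Longrightarrow> j < n \<Longrightarrow> c j = 0"
proof (induction j rule: less_induct)
  case (less j)
  define p where "p = n - 1 - j"
  have "(f ^^ p) (\<Sum>i<n. c i *s (f ^^ i) e) = (\<Sum>i<n. c i *s (f ^^ (p + i)) e)"
    by (simp add: vp.linear_sum[OF linpow] vp.linear_scale[OF linpow] pw)
  also have "\<dots> = (\<Sum>i<n. if i = j then c j *s (f ^^ (n - 1)) e else 0)"
  proof (rule sum.cong)
    fix i assume i: "i \<in> {..<n}"
    show "c i *s (f ^^ (p + i)) e = (if i = j then c j *s (f ^^ (n - 1)) e else 0)"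
    proof (cases "i < j")
      case True then show ?thesis using less by simp
    next
      case False
      show ?thesis
      proof (cases "i = j")
        case True then show ?thesis using less p_def by simp
      next
        case F: False
        then have "p + i \<ge> n" using False p_def less by simp
        then show ?thesis using F big0 by simp
      qed
    qed
  qed simp
  also have "\<dots> = c j *s (f ^^ (n - 1)) e" using less by simp
  finally have "c j *s (f ^^ (n - 1)) e = 0" using less vp.linear_0[OF linpow] by simp
  then show ?case using e by simp
qed

lemma injB: "inj_on (\<lambda>i. (f ^^ i) e) {..<n}"
proof -
  have *: "(f ^^ i) e \<noteq> (f ^^ j) e" if "i < j" "j < n" for i j
  proof
    assume eq: "(f ^^ i) e = (f ^^ j) e"
    have "(f ^^ (n - 1 - i)) ((f ^^ i) e) = (f ^^ (n - 1)) e"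
      using that by (simp add: pw)
    moreover have "(f ^^ (n - 1 - i)) ((f ^^ j) e) = 0"
      using that by (simp add: pw big0)
    ultimately show False using eq e by simp
  qed
  show ?thesis unfolding inj_on_def
    by (metis * lessThan_iff linorder_neqE_nat)
qed

definition "BB = (\<lambda>i. (f ^^ i) e) ` {..<n}"

lemma sum_BB: "(\<Sum>x\<in>BB. g x) = (\<Sum>i<n. g ((f ^^ i) e))"
  unfolding BB_def using sum.reindex[OF injB] by simp

lemma indepB: "independent BB"
proof (rule independent_if_scalars_zero)
  show "finite BB" unfolding BB_def by simp
next
  fix g x assume s: "(\<Sum>x\<in>BB. g x *s x) = 0" and x: "x \<in> BB"
  then obtain i where i: "i < n" "x = (f ^^ i) e" unfolding BB_def by auto
  have "(\<Sum>i<n. g ((f ^^ i) e) *s (f ^^ i) e) = 0" using s sum_BB[of "\<lambda>x. g x *s x"] by simp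
  from key[OF this i(1)] show "g x = 0" using i by simp
qed

lemma cardB: "card BB = n"
  unfolding BB_def using card_image[OF injB] by simp

lemma spanB: "span BB = UNIV"
proof -
  obtain T where T: "finite T" "span T = UNIV" using fin by blast
  obtain B0 where B0: "independent B0" "UNIV \<subseteq> span B0" "card B0 = dim UNIV"
    using basis_exists[of UNIV] by blast
  have fB0: "finite B0" using independent_span_bound[OF T(1) B0(1)] T(2) by simp
  interpret fd: finite_dimensional_vector_space scale B0
    by unfold_locales (use fB0 B0 in auto)
  have "finite BB" unfolding BB_def by simp
  then have "UNIV \<subseteq> span BB"
    using fd.card_eq_dim[of BB UNIV] indepB cardB dimn by simp
  then show ?thesis by auto
qed

lemma rep: "\<exists>c. v = (\<Sum>i<n. c i *s (f ^^ i) e)"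
proof -
  have "v \<in> span BB" using spanB by simp
  then obtain u where "v = (\<Sum>x\<in>BB. u x *s x)"
    using span_finite[of BB] unfolding BB_def by auto
  then have "v = (\<Sum>i<n. u ((f ^^ i) e) *s (f ^^ i) e)" using sum_BB by simp
  then show ?thesis by (rule exI[where x="\<lambda>i. u ((f ^^ i) e)"])
qed

lemma ker: "f w = 0 \<Longrightarrow> \<exists>l. w = l *s (f ^^ (n - 1)) e"
proof -
  assume fw: "f w = 0"
  obtain c where c: "w = (\<Sum>i<n. c i *s (f ^^ i) e)" using rep by blast
  obtain m where m: "n = Suc m" using npos by (cases n) auto
  have "f w = (\<Sum>i<n. c i *s (f ^^ Suc i) e)"
    using c by (simp add: vp.linear_sum[OF lin] vp.linear_scale[OF lin])
  also have "\<dots> = (\<Sum>i<m. c i *s (f ^^ Suc i) e)"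
    using m big0[of "Suc m"] by simp
  finally have s0: "(\<Sum>i<m. c i *s (f ^^ Suc i) e) = 0" using fw by simp
  define d where "d i = (if i = 0 then 0 else c (i - 1))" for i
  have "(\<Sum>i<n. d i *s (f ^^ i) e) = d 0 *s (f ^^ 0) e + (\<Sum>i<m. d (Suc i) *s (f ^^ Suc i) e)"
    unfolding m by (rule sum.lessThan_Suc_shift)
  also have "\<dots> = 0" using s0 by (simp add: d_def)
  finally have sd: "(\<Sum>i<n. d i *s (f ^^ i) e) = 0" .
  have cz: "c i = 0" if "i < m" for i
    using key[OF sd, of "Suc i"] that m by (simp add: d_def)
  have "w = (\<Sum>i<m. c i *s (f ^^ i) e) + c m *s (f ^^ m) e"
    using c m by simp
  also have "\<dots> = c m *s (f ^^ (n - 1)) e" using cz m by simp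
  finally show ?thesis by blast
qed

end

theorem corollary3p8:
  fixes scale :: "'k::field \<Rightarrow> 'v::ab_group_add \<Rightarrow> 'v"
    and f :: "'v \<Rightarrow> 'v" and e :: 'v and n :: nat
  assumes vs: "vector_space scale"
    and fin: "\<exists>B. finite B \<and> module.span scale B = UNIV"
    and dim: "vector_space.dim scale UNIV = n"
    and lin: "Vector_Spaces.linear scale scale f"
    and annih: "f ^^ n = (\<lambda>_. 0)"
    and minim: "\<forall>m<n. f ^^ m \<noteq> (\<lambda>_. 0)"
    and e: "(f ^^ (n - 1)) e \<noteq> 0"
  shows "(\<forall>g. generalized_inverse scale f g \<longleftrightarrow>
            Vector_Spaces.linear scale scale g \<and>
            (\<exists>(lam::nat \<Rightarrow> 'k) (\<alpha>::nat \<Rightarrow> 'k).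
               (\<forall>i\<in>{1..n-1}. g ((f ^^ i) e) = (f ^^ (i - 1)) e + scale (lam i) ((f ^^ (n - 1)) e)) \<and>
               g e = (\<Sum>h<n. scale (\<alpha> h) ((f ^^ h) e))))
       \<and> (\<forall>(lam::nat \<Rightarrow> 'k) (\<alpha>::nat \<Rightarrow> 'k). \<exists>!g.
            Vector_Spaces.linear scale scale g \<and>
            (\<forall>i\<in>{1..n-1}. g ((f ^^ i) e) = (f ^^ (i - 1)) e + scale (lam i) ((f ^^ (n - 1)) e)) \<and>
            g e = (\<Sum>h<n. scale (\<alpha> h) ((f ^^ h) e)))"
proof -
  interpret nilcyc scale f e n
    using vs fin dim lin annih e by (simp add: nilcyc_def nilcyc_axioms_def)
  interpret vp: vector_space_pair scale scale by unfold_locales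
  let ?C = "\<lambda>g lam. (\<forall>i\<in>{1..n-1}. g ((f ^^ i) e) = (f ^^ (i - 1)) e + scale (lam i) ((f ^^ (n - 1)) e))"
  have linff: "Vector_Spaces.linear scale scale (f \<circ> g \<circ> f)" if "Vector_Spaces.linear scale scale g" for g
    using Vector_Spaces.linear_compose[OF Vector_Spaces.linear_compose[OF lin that] lin] by (simp add: o_assoc)
  have P1: "generalized_inverse scale f g \<longleftrightarrow>
            Vector_Spaces.linear scale scale g \<and>
            (\<exists>(lam::nat \<Rightarrow> 'k) (\<alpha>::nat \<Rightarrow> 'k). ?C g lam \<and>
               g e = (\<Sum>h<n. scale (\<alpha> h) ((f ^^ h) e)))" for g
  proof
    assume gi: "generalized_inverse scale f g"
    then have lg: "Vector_Spaces.linear scale scale g" and fgf: "f \<circ> g \<circ> f = f"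
      by (auto simp: generalized_inverse_def)
    have ex: "\<exists>l. g ((f ^^ i) e) = (f ^^ (i - 1)) e + scale l ((f ^^ (n - 1)) e)"
      if i: "i \<in> {1..n-1}" for i
    proof -
      define w where "w = g ((f ^^ i) e) - (f ^^ (i - 1)) e"
      have fi: "(f ^^ i) e = f ((f ^^ (i - 1)) e)"
        using i by (cases i) auto
      have "f w = f (g (f ((f ^^ (i - 1)) e))) - f ((f ^^ (i - 1)) e)"
        unfolding w_def fi by (simp add: vp.linear_diff[OF lin])
      also have "\<dots> = 0" using fun_cong[OF fgf, of "(f ^^ (i - 1)) e"] by simp
      finally obtain l where "w = scale l ((f ^^ (n - 1)) e)" using ker by blast
      then have "g ((f ^^ i) e) = scale l ((f ^^ (n - 1)) e) + (f ^^ (i - 1)) e"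
        unfolding w_def diff_eq_eq .
      then show ?thesis by (simp add: add.commute)
    qed
    define lam where "lam i = (SOME l. g ((f ^^ i) e) = (f ^^ (i - 1)) e + scale l ((f ^^ (n - 1)) e))" for i
    have "?C g lam"
    proof
      fix i assume "i \<in> {1..n-1}"
      from someI_ex[OF ex[OF this]] show "g ((f ^^ i) e) = (f ^^ (i - 1)) e + scale (lam i) ((f ^^ (n - 1)) e)"
        unfolding lam_def .
    qed
    moreover obtain \<alpha> where "g e = (\<Sum>h<n. scale (\<alpha> h) ((f ^^ h) e))" using rep by blast
    ultimately have "\<exists>(lam::nat \<Rightarrow> 'k) (\<alpha>::nat \<Rightarrow> 'k). ?C g lam \<and>
               g e = (\<Sum>h<n. scale (\<alpha> h) ((f ^^ h) e))" by (intro exI conjI)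
    then show "Vector_Spaces.linear scale scale g \<and>
            (\<exists>(lam::nat \<Rightarrow> 'k) (\<alpha>::nat \<Rightarrow> 'k). ?C g lam \<and>
               g e = (\<Sum>h<n. scale (\<alpha> h) ((f ^^ h) e)))" using lg by (intro conjI)
  next
    assume "Vector_Spaces.linear scale scale g \<and>
            (\<exists>(lam::nat \<Rightarrow> 'k) (\<alpha>::nat \<Rightarrow> 'k). ?C g lam \<and>
               g e = (\<Sum>h<n. scale (\<alpha> h) ((f ^^ h) e)))"
    then obtain lam where lg: "Vector_Spaces.linear scale scale g" and C: "?C g lam" by blast
    have "(f \<circ> g \<circ> f) x = f x" for x
    proof (rule vp.linear_eq_on[OF linff[OF lg] lin])
      show "x \<in> span BB" using spanB by simp
    next
      fix b assume "b \<in> BB"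
      then obtain i where i: "i < n" "b = (f ^^ i) e" unfolding BB_def by auto
      show "(f \<circ> g \<circ> f) b = f b"
      proof (cases "Suc i < n")
        case True
        then have si: "Suc i \<in> {1..n-1}" by simp
        have "g ((f ^^ Suc i) e) = (f ^^ i) e + scale (lam (Suc i)) ((f ^^ (n - 1)) e)"
          using C[rule_format, OF si] by simp
        moreover have "f ((f ^^ (n - 1)) e) = 0" using big0[of n e] npos
          by (cases n) auto
        ultimately show ?thesis using i
          by (simp add: vp.linear_add[OF lin] vp.linear_scale[OF lin])
      next
        case False
        then have "f b = 0" using i big0[of "Suc i"] by simp
        then show ?thesis by (simp add: vp.linear_0[OF lin] vp.linear_0[OF lg])
      qed
    qed
    then show "generalized_inverse scale f g" unfolding generalized_inverse_def
      using lg by auto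
  qed
  have P2: "\<exists>!g. Vector_Spaces.linear scale scale g \<and> ?C g lam \<and>
            g e = (\<Sum>h<n. scale (\<alpha> h) ((f ^^ h) e))" for lam \<alpha>
  proof -
  define F where "F i = (if i = 0 then (\<Sum>h<n. scale (\<alpha> h) ((f ^^ h) e))
     else (f ^^ (i - 1)) e + scale (lam i) ((f ^^ (n - 1)) e))" for i
  define g where "g = vp.construct BB (\<lambda>v. F (inv_into {..<n} (\<lambda>i. (f ^^ i) e) v))"
  have gb: "g ((f ^^ i) e) = F i" if "i < n" for i
  proof -
    have "(f ^^ i) e \<in> BB" using that unfolding BB_def by auto
    then have "g ((f ^^ i) e) = F (inv_into {..<n} (\<lambda>i. (f ^^ i) e) ((f ^^ i) e))"
      unfolding g_def by (rule vp.construct_basis[OF indepB])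
    then show ?thesis using inv_into_f_f[OF injB, of i] that by simp
  qed
  have lgg: "Vector_Spaces.linear scale scale g" unfolding g_def by (rule vp.linear_construct[OF indepB])
  show ?thesis
  proof (rule ex1I[of _ g])
    show "Vector_Spaces.linear scale scale g \<and> ?C g lam \<and>
            g e = (\<Sum>h<n. scale (\<alpha> h) ((f ^^ h) e))"
    proof (intro conjI ballI)
      show "Vector_Spaces.linear scale scale g" unfolding g_def by (rule vp.linear_construct[OF indepB])
    next
      fix i assume ii: "i \<in> {1..n-1}"
      show "g ((f ^^ i) e) = (f ^^ (i - 1)) e + scale (lam i) ((f ^^ (n - 1)) e)"
      proof -
        have "i < n" "i \<noteq> 0" using ii npos by auto
        then show ?thesis using gb[of i] by (simp add: F_def)
      qed
    next
      show "g e = (\<Sum>h<n. scale (\<alpha> h) ((f ^^ h) e))" using gb[of 0] npos by (simp add: F_def)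
    qed
  next
    fix g1 assume A: "Vector_Spaces.linear scale scale g1 \<and> ?C g1 lam \<and>
            g1 e = (\<Sum>h<n. scale (\<alpha> h) ((f ^^ h) e))"
    show "g1 = g"
    proof
      fix x
      show "g1 x = g x"
      proof (rule vp.linear_eq_on[where B=BB and x=x and f=g1 and g=g])
        show "x \<in> span BB" using spanB by simp
      next
        show "Vector_Spaces.linear scale scale g" by (rule lgg)
      next
        show "Vector_Spaces.linear scale scale g1" using A by simp
      next
        fix b assume "b \<in> BB"
        then obtain i where i: "i < n" "b = (f ^^ i) e" unfolding BB_def by auto
        show "g1 b = g b"
        proof (cases "i = 0")
          case True then show ?thesis using i A gb[of 0] by (simp add: F_def)
        next
          case False
          then have "i \<in> {1..n-1}" using i by simp
          then show ?thesis using i A gb[of i] False by (simp add: F_def)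
        qed
      qed
    qed
  qed
  qed
  show ?thesis
  proof (intro conjI allI)
    fix g show "generalized_inverse scale f g \<longleftrightarrow>
            Vector_Spaces.linear scale scale g \<and>
            (\<exists>(lam::nat \<Rightarrow> 'k) (\<alpha>::nat \<Rightarrow> 'k). ?C g lam \<and>
               g e = (\<Sum>h<n. scale (\<alpha> h) ((f ^^ h) e)))" by (rule P1)
  next
    fix lam \<alpha> show "\<exists>!g. Vector_Spaces.linear scale scale g \<and> ?C g lam \<and>
            g e = (\<Sum>h<n. scale (\<alpha> h) ((f ^^ h) e))" by (rule P2)
  qed
qed

end
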